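(* Let $m\ge 3$ be an integer. (1) Let $G\in\mathcal{H}_m$ and let $G_0,G_1,\dots,G_t,G$ be an $m$-decomposition of $G$ such that either $t=1$ and $G_t\neq G$, or $t\ge 2$. Then there exist positive integers $a,b$ with $b\le m$ such that $\rho^{\max}(G)=1+\frac{1}{m-1+b/a}$. (2) Let $\rho\in\left(1,\frac{m}{m-1}\right)$. Then there exists $\eta\in\mathbb{N}$ such that for every integer $v>\eta$, every graph $G\in\mathcal{H}_m$ with $v$ vertices has a subgraph with at most $\eta$ vertices whose density exceeds $\rho$.
   Context: All graphs are finite, simple, undirected. For a graph $G$, $v(G)$ and $e(G)$ are its numbers of vertices and edges, $\rho(G)=e(G)/v(G)$ its density, and $\rho^{\max}(G)=\max\{\rho(H):H\subseteq G\}$ (over all subgraphs). Let $H\subset G$ and $m$ a positive integer. $G$ is an $m$-extension of $H$ of the first type if $m\ge3$, $\rho^{\max}(G)<\frac{m}{m-1}$, and there is a vertex $x_1\in V(H)$ and integers $t_1\ge0$, $t_2\ge2$ with $t_1+t_2\le m-1$ such that $V(G)\setminus V(H)=\{y^1_1,\dots,y^1_{t_1},y^2_1,\dots,y^2_{t_2}\}$ and $E(G)\setminus E(H)=\{\{x_1,y^1_1\},\{y^1_1,y^1_2\},\dots,\{y^1_{t_1-1},y^1_{t_1}\},\{y^1_{t_1},y^2_1\},\{y^2_1,y^2_2\},\dots,\{y^2_{t_2-1},y^2_{t_2}\},\{y^2_{t_2},y^1_1\}\}$ (i.e. a path from $x_1$ followed by a cycle; when $t_1=0$, $x_1$ itself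 plays the role of $y^1_1$, being adjacent to $y^2_1$ and $y^2_{t_2}$). $G$ is an $m$-extension of $H$ of the second type if $m\ge2$, $\rho^{\max}(G)<\frac{m}{m-1}$, and there are distinct vertices $x_1,x_2\in V(H)$ and new vertices $y_1,\dots,y_t$ with $1\le t\le m-1$ such that $G=(V(H)\sqcup\{y_1,\dots,y_t\},\,E(H)\sqcup\{\{x_1,y_1\},\{y_1,y_2\},\dots,\{y_{t-1},y_t\},\{y_t,x_2\}\})$. $G$ is an $m$-extension of $H$ of the third type if $m\ge2$, $V(H)=V(G)$, $E(H)\subset E(G)$ and $\rho^{\max}(G)<\frac{m}{m-1}$. For $m\ge3$, $\mathcal{H}_m$ is the smallest class of graphs (up to isomorphism) containing the one-vertex graph with no edges and closed under taking $m$-extensions of the first, second and third types. An $m$-decomposition of $G\in\mathcal{H}_m$ is a sequence of graphs $G_0\subset G_1\subset\dots\subset G_t\subseteq G$, where $G_0$ is a one-vertex edgeless graph, $G_i\ne G_{i+1}$ for all $i$, each $G_i$ ($1\le i\le t$) is an $m$-extension of the first or second type of $G_{i-1}$, and $G$ either equals $G_t$ or is an $m$-extension of the third type of $G_t$. *)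

theory Defs
  imports Complex_Main
begin

text \<open>Finite simple graphs with vertices drawn from nat (H_m is taken up to isomorphism,
  and every finite graph is isomorphic to one on nat).  A graph is a pair (V, E).\<close>

type_synonym graph = "nat set \<times> nat set set"

definition verts :: "graph \<Rightarrow> nat set" where "verts G = fst G"
definition edges :: "graph \<Rightarrow> nat set set" where "edges G = snd G"

definition is_graph :: "graph \<Rightarrow> bool" where
  "is_graph G \<longleftrightarrow> finite (verts G) \<and>
     edges G \<subseteq> {{u, v} | u v. u \<in> verts G \<and> v \<in> verts G \<and> u \<noteq> v}"

definition subgraph :: "graph \<Rightarrow> graph \<Rightarrow> bool" where
  "subgraph H G \<longleftrightarrow> is_graph H \<and> verts H \<subseteq> verts G \<and> edges H \<subseteq> edges G"

definition density :: "graph \<Rightarrow> real" where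
  "density G = real (card (edges G)) / real (card (verts G))"

definition rho_max :: "graph \<Rightarrow> real" where
  "rho_max G = Max (density ` {H. subgraph H G})"

definition path_edges :: "nat list \<Rightarrow> nat set set" where
  "path_edges xs = set (map (\<lambda>(a, b). {a, b}) (zip xs (tl xs)))"

definition one_vertex_graph :: "graph \<Rightarrow> bool" where
  "one_vertex_graph G \<longleftrightarrow> (\<exists>x. G = ({x}, {}))"

text \<open>First type: new vertices ys1 = y^1_1..y^1_{t1}, ys2 = y^2_1..y^2_{t2}; new edges are the
  path x1, y^1_1, .., y^1_{t1}, y^2_1, .., y^2_{t2} plus the edge from y^2_{t2} back to y^1_1
  (to x1 if t1 = 0).\<close>
definition ext1 :: "nat \<Rightarrow> graph \<Rightarrow> graph \<Rightarrow> bool" where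
  "ext1 m H G \<longleftrightarrow> m \<ge> 3 \<and> rho_max G < real m / real (m - 1) \<and>
    (\<exists>x1 ys1 ys2. x1 \<in> verts H \<and> length ys2 \<ge> 2 \<and> length ys1 + length ys2 \<le> m - 1 \<and>
       distinct (ys1 @ ys2) \<and> set (ys1 @ ys2) \<inter> verts H = {} \<and>
       G = (verts H \<union> set (ys1 @ ys2),
            edges H \<union> path_edges (x1 # ys1 @ ys2) \<union> {{last ys2, hd (ys1 @ [x1])}}))"

definition ext2 :: "nat \<Rightarrow> graph \<Rightarrow> graph \<Rightarrow> bool" where
  "ext2 m H G \<longleftrightarrow> m \<ge> 2 \<and> rho_max G < real m / real (m - 1) \<and>
    (\<exists>x1 x2 ys. x1 \<in> verts H \<and> x2 \<in> verts H \<and> x1 \<noteq> x2 \<and>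
       1 \<le> length ys \<and> length ys \<le> m - 1 \<and>
       distinct ys \<and> set ys \<inter> verts H = {} \<and>
       G = (verts H \<union> set ys, edges H \<union> path_edges (x1 # ys @ [x2])))"

definition ext3 :: "nat \<Rightarrow> graph \<Rightarrow> graph \<Rightarrow> bool" where
  "ext3 m H G \<longleftrightarrow> m \<ge> 2 \<and> is_graph G \<and> verts H = verts G \<and> edges H \<subset> edges G \<and>
    rho_max G < real m / real (m - 1)"

definition graph_iso :: "graph \<Rightarrow> graph \<Rightarrow> bool" where
  "graph_iso H G \<longleftrightarrow> (\<exists>f. bij_betw f (verts H) (verts G) \<and> edges G = (\<lambda>e. f ` e) ` edges H)"

inductive Hm :: "nat \<Rightarrow> graph \<Rightarrow> bool" for m where
  base: "Hm m ({x}, {})"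
| first: "Hm m H \<Longrightarrow> ext1 m H G \<Longrightarrow> Hm m G"
| second: "Hm m H \<Longrightarrow> ext2 m H G \<Longrightarrow> Hm m G"
| third: "Hm m H \<Longrightarrow> ext3 m H G \<Longrightarrow> Hm m G"
| iso: "Hm m H \<Longrightarrow> graph_iso H G \<Longrightarrow> Hm m G"

definition m_decomposition :: "nat \<Rightarrow> (nat \<Rightarrow> graph) \<Rightarrow> nat \<Rightarrow> graph \<Rightarrow> bool" where
  "m_decomposition m Gs t G \<longleftrightarrow> one_vertex_graph (Gs 0) \<and>
    (\<forall>i<t. Gs i \<noteq> Gs (Suc i) \<and> (ext1 m (Gs i) (Gs (Suc i)) \<or> ext2 m (Gs i) (Gs (Suc i)))) \<and>
    (G = Gs t \<or> ext3 m (Gs t) G)"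

end

theory Submission
  imports Defs
begin


lemma pe_Nil[simp]: "path_edges [] = {}" by (simp add: path_edges_def)
lemma pe_single[simp]: "path_edges [a] = {}" by (simp add: path_edges_def)
lemma pe_Cons2[simp]: "path_edges (a#b#xs) = insert {a,b} (path_edges (b#xs))"
  by (simp add: path_edges_def)
lemma pe_finite[simp]: "finite (path_edges xs)" by (simp add: path_edges_def)

lemma pe_snoc: "xs \<noteq> [] \<Longrightarrow> path_edges (xs@[z]) = insert {last xs, z} (path_edges xs)"
  by (induction xs rule: induct_list012) auto

lemma pe_sub: "e \<in> path_edges xs \<Longrightarrow> distinct xs \<Longrightarrow> \<exists>u v. e = {u,v} \<and> u \<in> set xs \<and> v \<in> set xs \<and> u \<noteq> v"
  by (induction xs rule: induct_list012) auto

lemma pe_subset: "e \<in> path_edges xs \<Longrightarrow> e \<subseteq> set xs"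
  by (induction xs rule: induct_list012) auto

lemma pe_tl: "e \<in> path_edges xs \<Longrightarrow> \<exists>z\<in>set (tl xs). z \<in> e"
  by (induction xs rule: induct_list012) auto

lemma pe_card: "distinct xs \<Longrightarrow> card (path_edges xs) = length xs - 1"
proof (induction xs rule: induct_list012)
  case (3 a b xs)
  have "{a,b} \<notin> path_edges (b#xs)"
  proof
    assume "{a,b} \<in> path_edges (b#xs)"
    then have "{a,b} \<subseteq> set (b#xs)" by (rule pe_subset)
    with 3(3) show False by auto
  qed
  with 3 show ?case by simp
qed auto

lemma graph_edge: "is_graph G \<Longrightarrow> e \<in> edges G \<Longrightarrow> e \<subseteq> verts G"
  by (auto simp: is_graph_def)

lemma graph_fin_edges: "is_graph G \<Longrightarrow> finite (edges G)"
proof -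
  assume g: "is_graph G"
  then have "edges G \<subseteq> Pow (verts G)" by (auto simp: is_graph_def)
  moreover have "finite (verts G)" using g by (simp add: is_graph_def)
  ultimately show ?thesis by (meson finite_Pow_iff finite_subset)
qed


definition stepres :: "nat \<Rightarrow> graph \<Rightarrow> graph \<Rightarrow> bool" where
  "stepres m H G \<longleftrightarrow> is_graph G \<and> verts H \<subseteq> verts G \<and> edges H \<subseteq> edges G \<and>
    (\<exists>n. n \<le> m - 1 \<and> card (verts G) = card (verts H) + n \<and> card (edges H) + n + 1 \<le> card (edges G))"

lemma ext1_step:
  assumes "ext1 m H G" "is_graph H"
  shows "stepres m H G"
proof -
  from assms(1) obtain x1 ys1 ys2 where x1: "x1 \<in> verts H" and l2: "length ys2 \<ge> 2"
    and len: "length ys1 + length ys2 \<le> m-1" and dis: "distinct (ys1@ys2)"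
    and disj: "set (ys1@ys2) \<inter> verts H = {}"
    and G: "G = (verts H \<union> set (ys1@ys2), edges H \<union> path_edges (x1#ys1@ys2) \<union> {{last ys2, hd (ys1@[x1])}})"
    unfolding ext1_def by blast
  define L where "L = x1#ys1@ys2"
  have x1n: "x1 \<notin> set (ys1@ys2)" using x1 disj by auto
  have dL: "distinct L" using dis x1n L_def by auto
  define l where "l = last ys2"
  define h where "h = hd (ys1@[x1])"
  have ne2: "ys2 \<noteq> []" using l2 by auto
  have l_in: "l \<in> set ys2" using ne2 l_def by simp
  have h_in: "h \<in> set ys1 \<union> {x1}" by (cases ys1) (auto simp: h_def)
  have hl: "h \<noteq> l" using h_in l_in dis x1n by auto
  define B where "B = butlast ys2"
  have B: "ys2 = B @ [l]" using ne2 by (simp add: B_def l_def)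
  have Bne: "B \<noteq> []" using l2 B by (cases B) auto
  have LB: "L = (x1#ys1@B)@[l]" using B L_def by simp
  have pL: "path_edges L = insert {last (x1#ys1@B), l} (path_edges (x1#ys1@B))"
    unfolding LB by (rule pe_snoc) simp
  have lastB: "last (x1#ys1@B) \<in> set ys2" using Bne B by (simp add: in_set_butlastD)
  have hlast: "h \<noteq> last (x1#ys1@B)" using h_in lastB dis x1n by auto
  have lnot: "l \<notin> set (x1#ys1@B)" using dL LB by auto
  have ext_notin: "{l,h} \<notin> path_edges L"
  proof
    assume "{l,h} \<in> path_edges L"
    then consider "{l,h} = {last (x1#ys1@B), l}" | "{l,h} \<in> path_edges (x1#ys1@B)" using pL by auto
    then show False
    proof cases
      case 1 then show False using hl hlast by (auto simp: doubleton_eq_iff)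
    next
      case 2 then have "{l,h} \<subseteq> set (x1#ys1@B)" by (rule pe_subset)
      then show False using lnot by auto
    qed
  qed
  define N where "N = path_edges L \<union> {{l,h}}"
  have cardN: "card N = length (ys1@ys2) + 1"
    using ext_notin pe_card[OF dL] by (simp add: N_def L_def)
  have newv: "\<forall>e\<in>N. \<exists>z. z \<in> e \<and> z \<notin> verts H"
  proof
    fix e assume "e \<in> N"
    then consider "e \<in> path_edges L" | "e = {l,h}" by (auto simp: N_def)
    then show "\<exists>z. z \<in> e \<and> z \<notin> verts H"
    proof cases
      case 1 then obtain z where "z \<in> set (tl L)" "z \<in> e" using pe_tl by blast
      then show ?thesis using disj L_def by auto
    next
      case 2 then show ?thesis using l_in disj by auto
    qed
  qed
  have disjE: "edges H \<inter> N = {}" using newv graph_edge[OF assms(2)] by blast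
  have finH: "finite (edges H)" using graph_fin_edges[OF assms(2)] .
  have eG: "edges G = edges H \<union> N" using G by (auto simp: edges_def N_def L_def l_def h_def)
  have vG: "verts G = verts H \<union> set (ys1@ys2)" using G by (simp add: verts_def)
  have cE: "card (edges G) = card (edges H) + card N"
  proof -
    have "finite N" by (simp add: N_def)
    then show ?thesis using eG disjE finH card_Un_disjoint by metis
  qed
  have finV: "finite (verts H)" using assms(2) by (simp add: is_graph_def)
  have cV: "card (verts G) = card (verts H) + length (ys1@ys2)"
    using vG disj finV dis by (simp add: card_Un_disjoint distinct_card Int_commute)
  have isg: "is_graph G"
    unfolding is_graph_def
  proof
    show "finite (verts G)" using vG finV by simp
    show "edges G \<subseteq> {{u, v} |u v. u \<in> verts G \<and> v \<in> verts G \<and> u \<noteq> v}"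
    proof
      fix e assume e: "e \<in> edges G"
      then consider "e \<in> edges H" | "e \<in> path_edges L" | "e = {l,h}" using eG N_def by auto
      then show "e \<in> {{u, v} |u v. u \<in> verts G \<and> v \<in> verts G \<and> u \<noteq> v}"
      proof cases
        case 1
        then obtain u v where "e = {u,v}" "u \<in> verts H" "v \<in> verts H" "u \<noteq> v"
          using assms(2) unfolding is_graph_def by blast
        then show ?thesis using vG by blast
      next
        case 2 then obtain u v where "e = {u,v}" "u \<in> set L" "v \<in> set L" "u \<noteq> v"
          using pe_sub dL by blast
        then show ?thesis using vG x1 L_def by auto
      next
        case 3 then show ?thesis using vG l_in h_in x1 hl by auto
      qed
    qed
  qed
  show ?thesis unfolding stepres_def
    using isg vG eG cE cV cardN len by auto
qed


lemma ext2_step: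
  assumes "ext2 m H G" "is_graph H"
  shows "stepres m H G"
proof -
  from assms(1) obtain x1 x2 ys where x1: "x1 \<in> verts H" and x2: "x2 \<in> verts H" and x12: "x1 \<noteq> x2"
    and l1: "1 \<le> length ys" and len: "length ys \<le> m-1" and dis: "distinct ys"
    and disj: "set ys \<inter> verts H = {}"
    and G: "G = (verts H \<union> set ys, edges H \<union> path_edges (x1#ys@[x2]))"
    unfolding ext2_def by blast
  define L where "L = x1#ys@[x2]"
  have dL: "distinct L" using dis x1 x2 x12 disj L_def by auto
  have ne: "ys \<noteq> []" using l1 by auto
  have pL: "path_edges L = insert {last (x1#ys), x2} (path_edges (x1#ys))"
    unfolding L_def by (metis append_Cons list.distinct(1) pe_snoc)
  have lastin: "last (x1#ys) \<in> set ys" using ne by simp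
  have newv: "\<forall>e\<in>path_edges L. \<exists>z. z \<in> e \<and> z \<notin> verts H"
  proof
    fix e assume "e \<in> path_edges L"
    then consider "e = {last (x1#ys), x2}" | "e \<in> path_edges (x1#ys)" using pL by auto
    then show "\<exists>z. z \<in> e \<and> z \<notin> verts H"
    proof cases
      case 1
      have "last (x1#ys) \<notin> verts H" using lastin disj by blast
      then show ?thesis using 1 by blast
    next
      case 2 then obtain z where "z \<in> set (tl (x1#ys))" "z \<in> e" using pe_tl by blast
      then show ?thesis using disj by auto
    qed
  qed
  have disjE: "edges H \<inter> path_edges L = {}" using newv graph_edge[OF assms(2)] by blast
  have finH: "finite (edges H)" using graph_fin_edges[OF assms(2)] .
  have eG: "edges G = edges H \<union> path_edges L" using G by (simp add: edges_def L_def)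
  have vG: "verts G = verts H \<union> set ys" using G by (simp add: verts_def)
  have cE: "card (edges G) = card (edges H) + card (path_edges L)"
    using eG disjE finH card_Un_disjoint pe_finite by metis
  have cN: "card (path_edges L) = length ys + 1" using pe_card[OF dL] L_def by simp
  have finV: "finite (verts H)" using assms(2) by (simp add: is_graph_def)
  have cV: "card (verts G) = card (verts H) + length ys"
    using vG disj finV dis by (simp add: card_Un_disjoint distinct_card Int_commute)
  have isg: "is_graph G"
    unfolding is_graph_def
  proof
    show "finite (verts G)" using vG finV by simp
    show "edges G \<subseteq> {{u, v} |u v. u \<in> verts G \<and> v \<in> verts G \<and> u \<noteq> v}"
    proof
      fix e assume e: "e \<in> edges G"
      then consider "e \<in> edges H" | "e \<in> path_edges L" using eG by auto
      then show "e \<in> {{u, v} |u v. u \<in> verts G \<and> v \<in> verts G \<and> u \<noteq> v}"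
      proof cases
        case 1
        then obtain u v where "e = {u,v}" "u \<in> verts H" "v \<in> verts H" "u \<noteq> v"
          using assms(2) unfolding is_graph_def by blast
        then show ?thesis using vG by blast
      next
        case 2 then obtain u v where "e = {u,v}" "u \<in> set L" "v \<in> set L" "u \<noteq> v"
          using pe_sub dL by blast
        then show ?thesis using vG x1 x2 L_def by auto
      qed
    qed
  qed
  show ?thesis unfolding stepres_def
    using isg vG eG cE cV cN len by auto
qed

lemma ext12_step:
  assumes "ext1 m H G \<or> ext2 m H G" "is_graph H"
  shows "stepres m H G \<and> rho_max G < real m / real (m - 1)"
proof -
  have "stepres m H G" using assms ext1_step ext2_step by blast
  moreover have "rho_max G < real m / real (m - 1)" using assms(1)
    unfolding ext1_def ext2_def by blast
  ultimately show ?thesis by blast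
qed


lemma sub_finite: "is_graph G \<Longrightarrow> finite {H. subgraph H G}"
proof -
  assume g: "is_graph G"
  have "{H. subgraph H G} \<subseteq> Pow (verts G) \<times> Pow (edges G)"
    by (auto simp: subgraph_def verts_def edges_def)
  moreover have "finite (Pow (verts G) \<times> Pow (edges G))"
    using g graph_fin_edges by (simp add: is_graph_def)
  ultimately show ?thesis by (rule finite_subset)
qed

lemma sub_refl: "is_graph G \<Longrightarrow> subgraph G G" by (simp add: subgraph_def)

lemma rho_max_props:
  assumes "is_graph G"
  shows "(\<exists>F. subgraph F G \<and> density F = rho_max G) \<and> density G \<le> rho_max G"
proof -
  have fin: "finite (density ` {H. subgraph H G})" using sub_finite[OF assms] by simp
  have ne: "density ` {H. subgraph H G} \<noteq> {}" using sub_refl[OF assms] by blast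
  have "rho_max G \<in> density ` {H. subgraph H G}" unfolding rho_max_def using Max_in[OF fin ne] .
  moreover have "density G \<le> rho_max G" unfolding rho_max_def
    using Max_ge[OF fin] sub_refl[OF assms] by blast
  ultimately show ?thesis by force
qed

lemma core:
  assumes g: "is_graph G" and m3: "m \<ge> 3" and rm: "rho_max G < real m / real (m-1)"
    and ev: "card (edges G) > card (verts G)"
    and X: "real m * card (verts G) - (real m - 1) * card (edges G) \<le> real m"
  shows "\<exists>a b::nat. a>0 \<and> b>0 \<and> b \<le> m \<and> rho_max G = 1 + 1/(real m - 1 + real b / real a)"
proof -
  obtain F where F: "subgraph F G" "density F = rho_max G" and dG: "density G \<le> rho_max G"
    using rho_max_props[OF g] by blast
  have finG: "finite (verts G)" using g by (simp add: is_graph_def)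
  have vFG: "card (verts F) \<le> card (verts G)"
    using F(1) finG by (simp add: subgraph_def card_mono)
  have vG0: "card (verts G) > 0"
  proof (rule ccontr)
    assume "\<not> card (verts G) > 0"
    then have "verts G = {}" using finG by simp
    then have "edges G = {}" using g unfolding is_graph_def by blast
    then show False using ev by simp
  qed
  define V where "V = real (card (verts F))"
  define E where "E = real (card (edges F))"
  define V' where "V' = real (card (verts G))"
  define E' where "E' = real (card (edges G))"
  have V'0: "V' > 0" using vG0 V'_def by simp
  have EV': "E' > V'" using ev E'_def V'_def by simp
  have VV': "V \<le> V'" using vFG V_def V'_def by simp
  have V0': "V \<ge> 0" using V_def by simp
  have dG1: "E' / V' > 1" using EV' V'0 by simp
  have dFG: "E' / V' \<le> E / V" using dG F(2) unfolding density_def E_def V_def E'_def V'_def by simp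
  have V0: "V > 0"
  proof (rule ccontr)
    assume "\<not> V > 0" then have "V = 0" using V0' by simp
    then show False using dFG dG1 by simp
  qed
  have m1: "real m - 1 > 0" using m3 by simp
  have rmF: "E / V < real m / (real m - 1)"
    using F(2) rm m3 unfolding density_def E_def V_def by (simp add: of_nat_diff)
  have lt: "(real m - 1) * E < real m * V"
    using rmF V0 m1 by (simp add: field_simps)
  have "E / V > 1" using dFG dG1 by linarith
  then have EV: "E > V" using V0 by (simp add: field_simps)
  have cross: "E' * V \<le> E * V'" using dFG V0 V'0 by (simp add: field_simps)
  have bm: "real m * V - (real m - 1) * E \<le> real m"
  proof -
    have "V' * (real m * V - (real m - 1) * E) = real m * V * V' - (real m - 1) * (E * V')"
      by (simp add: algebra_simps)
    also have "\<dots> \<le> real m * V * V' - (real m - 1) * (E' * V)"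
      using cross m1 by (simp add: mult_left_mono)
    also have "\<dots> = V * (real m * V' - (real m - 1) * E')" by (simp add: algebra_simps)
    also have "\<dots> \<le> V * real m" using X V0' unfolding V'_def E'_def by (simp add: mult_left_mono)
    also have "\<dots> \<le> V' * real m" using VV' by (simp add: mult_right_mono)
    finally show ?thesis using V'0 by simp
  qed
  define a where "a = card (edges F) - card (verts F)"
  define b where "b = m * card (verts F) - (m-1) * card (edges F)"
  have ra: "real a = E - V" using EV unfolding a_def E_def V_def by (simp add: of_nat_diff)
  have le: "(m-1) * card (edges F) \<le> m * card (verts F)"
  proof -
    have "real ((m-1) * card (edges F)) = (real m - 1) * E" using m3 by (simp add: of_nat_diff E_def)
    also have "\<dots> < real m * V" using lt .
    also have "\<dots> = real (m * card (verts F))" by (simp add: V_def)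
    finally show ?thesis by linarith
  qed
  have rb: "real b = real m * V - (real m - 1) * E"
    using le m3 unfolding b_def E_def V_def by (simp add: of_nat_diff)
  show ?thesis
  proof (intro exI conjI)
    show "a > 0" using ra EV by simp
    show "b > 0" using rb lt by simp
    show "b \<le> m" using rb bm by simp
    have a0: "real a > 0" using ra EV by simp
    have id: "(real m - 1) * real a + real b = V" unfolding ra rb by (simp add: algebra_simps)
    have "real m - 1 + real b / real a = ((real m - 1) * real a + real b) / real a"
      using a0 by (simp add: field_simps)
    also have "\<dots> = V / (E - V)" using id ra by simp
    finally have "real m - 1 + real b / real a = V / (E - V)" .
    then have "1 + 1 / (real m - 1 + real b / real a) = 1 + (E - V) / V" by simp
    also have "\<dots> = E / V" using V0 by (simp add: field_simps)
    also have "\<dots> = rho_max G" using F(2) unfolding density_def E_def V_def by simp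
    finally show "rho_max G = 1 + 1 / (real m - 1 + real b / real a)" by simp
  qed
qed


lemma decomp_counts:
  assumes "m_decomposition m Gs t G"
  shows "i \<le> t \<Longrightarrow> is_graph (Gs i) \<and> card (verts (Gs i)) \<le> 1 + i*(m-1) \<and>
           card (verts (Gs i)) + i \<le> card (edges (Gs i)) + 1"
proof (induction i)
  case 0
  obtain x where "Gs 0 = ({x},{})" using assms by (auto simp: m_decomposition_def one_vertex_graph_def)
  then show ?case by (simp add: is_graph_def verts_def edges_def)
next
  case (Suc i)
  then have IH: "is_graph (Gs i) \<and> card (verts (Gs i)) \<le> 1 + i*(m-1) \<and>
           card (verts (Gs i)) + i \<le> card (edges (Gs i)) + 1" by simp
  have "ext1 m (Gs i) (Gs (Suc i)) \<or> ext2 m (Gs i) (Gs (Suc i))"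
    using assms Suc(2) by (simp add: m_decomposition_def)
  then have "stepres m (Gs i) (Gs (Suc i))" using ext12_step IH by blast
  then show ?case using IH unfolding stepres_def by auto
qed

lemma part1:
  assumes m3: "m \<ge> 3" and D: "m_decomposition m Gs t G" and c: "(t = 1 \<and> Gs t \<noteq> G) \<or> t \<ge> 2"
  shows "\<exists>a b :: nat. a > 0 \<and> b > 0 \<and> b \<le> m \<and> rho_max G = 1 + 1 / (real m - 1 + real b / real a)"
proof -
  have T: "is_graph (Gs t) \<and> card (verts (Gs t)) \<le> 1 + t*(m-1) \<and>
           card (verts (Gs t)) + t \<le> card (edges (Gs t)) + 1" using decomp_counts[OF D] by simp
  have m1: "real (m-1) = real m - 1" using m3 by (simp add: of_nat_diff)
  from D have "G = Gs t \<or> ext3 m (Gs t) G" by (simp add: m_decomposition_def)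
  then show ?thesis
  proof
    assume G: "G = Gs t"
    then have t2: "t \<ge> 2" using c by auto
    then obtain j where j: "t = Suc j" by (cases t) auto
    have "ext1 m (Gs j) (Gs t) \<or> ext2 m (Gs j) (Gs t)"
      using D j by (simp add: m_decomposition_def)
    moreover have "is_graph (Gs j)" using decomp_counts[OF D, of j] j by simp
    ultimately have rm: "rho_max G < real m / real (m-1)" using ext12_step G by blast
    have g: "is_graph G" using T G by simp
    have ev: "card (edges G) > card (verts G)" using T G t2 by simp
    have X: "real m * card (verts G) - (real m - 1) * card (edges G) \<le> real m"
    proof -
      have v: "real (card (verts G)) \<le> 1 + real t * (real m - 1)"
        using T G m1 by (metis (mono_tags, lifting) of_nat_1 of_nat_add of_nat_le_iff of_nat_mult)
      have e: "real (card (verts G)) + real t \<le> real (card (edges G)) + 1"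
        using T G by (metis of_nat_1 of_nat_add of_nat_le_iff)
      have "(real m - 1) * (real (card (verts G)) + real t - 1) \<le> (real m - 1) * real (card (edges G))"
        using e m3 by (intro mult_left_mono) auto
      then show ?thesis using v by (simp add: algebra_simps)
    qed
    show ?thesis using core[OF g m3 rm ev X] .
  next
    assume E3: "ext3 m (Gs t) G"
    have t1: "t \<ge> 1" using c by auto
    have g: "is_graph G" and vv: "verts (Gs t) = verts G" and ss: "edges (Gs t) \<subset> edges G"
      and rm: "rho_max G < real m / real (m-1)" using E3 by (auto simp: ext3_def)
    have "card (edges (Gs t)) < card (edges G)" using ss graph_fin_edges[OF g] by (rule psubset_card_mono[rotated])
    then have T2: "card (verts G) \<le> 1 + t*(m-1)" "card (verts G) + t \<le> card (edges G)"
      using T vv by auto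
    have ev: "card (edges G) > card (verts G)" using T2 t1 by simp
    have X: "real m * card (verts G) - (real m - 1) * card (edges G) \<le> real m"
    proof -
      have v: "real (card (verts G)) \<le> 1 + real t * (real m - 1)"
        using T2 m1 by (metis (mono_tags, lifting) of_nat_1 of_nat_add of_nat_le_iff of_nat_mult)
      have e: "real (card (verts G)) + real t \<le> real (card (edges G))"
        using T2 by (metis of_nat_add of_nat_le_iff)
      have "(real m - 1) * (real (card (verts G)) + real t) \<le> (real m - 1) * real (card (edges G))"
        using e m3 by (intro mult_left_mono) auto
      then show ?thesis using v m3 by (simp add: algebra_simps)
    qed
    show ?thesis using core[OF g m3 rm ev X] .
  qed
qed




lemma iso_sub:
  assumes bij: "bij_betw f (verts H) (verts G)" and eG: "edges G = (\<lambda>e. f`e) ` edges H"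
    and K: "subgraph K H"
  shows "subgraph (f ` verts K, (\<lambda>e. f`e) ` edges K) G \<and> card (f ` verts K) = card (verts K)
         \<and> card ((\<lambda>e. f`e) ` edges K) = card (edges K)"
proof -
  have inj: "inj_on f (verts H)" using bij by (simp add: bij_betw_def)
  have KH: "verts K \<subseteq> verts H" "edges K \<subseteq> edges H" and gK: "is_graph K" using K by (auto simp: subgraph_def)
  have injK: "inj_on f (verts K)" using inj KH(1) by (rule inj_on_subset)
  have eK: "\<And>e. e \<in> edges K \<Longrightarrow> e \<subseteq> verts H" using graph_edge[OF gK] KH(1) by blast
  have inj2: "inj_on (\<lambda>e. f`e) (edges K)"
  proof (rule inj_onI)
    fix e1 e2 assume "e1 \<in> edges K" "e2 \<in> edges K" "f ` e1 = f ` e2"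
    then show "e1 = e2" using inj_on_image_eq_iff[OF inj eK eK] by blast
  qed
  have c1: "card (f ` verts K) = card (verts K)" using injK by (rule card_image)
  have c2: "card ((\<lambda>e. f`e) ` edges K) = card (edges K)" using inj2 by (rule card_image)
  have isg: "is_graph (f ` verts K, (\<lambda>e. f`e) ` edges K)"
    unfolding is_graph_def verts_def edges_def fst_conv snd_conv
  proof
    show "finite (f ` fst K)" using gK by (simp add: is_graph_def verts_def)
    show "(`) f ` snd K \<subseteq> {{u, v} |u v. u \<in> f ` fst K \<and> v \<in> f ` fst K \<and> u \<noteq> v}"
    proof
      fix e' assume "e' \<in> (`) f ` snd K"
      then obtain e where e: "e \<in> edges K" "e' = f ` e" by (auto simp: edges_def)
      then obtain u v where uv: "e = {u,v}" "u \<in> verts K" "v \<in> verts K" "u \<noteq> v"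
        using gK unfolding is_graph_def by blast
      then have "f u \<noteq> f v" using injK by (meson inj_on_def)
      then show "e' \<in> {{u, v} |u v. u \<in> f ` fst K \<and> v \<in> f ` fst K \<and> u \<noteq> v}"
        using e uv by (auto simp: verts_def)
    qed
  qed
  have "subgraph (f ` verts K, (\<lambda>e. f`e) ` edges K) G"
    unfolding subgraph_def
  proof (intro conjI)
    show "is_graph (f ` verts K, (`) f ` edges K)" using isg .
    have "f ` verts H = verts G" using bij by (simp add: bij_betw_def)
    then show "verts (f ` verts K, (`) f ` edges K) \<subseteq> verts G" using KH(1) by (auto simp: verts_def)
    show "edges (f ` verts K, (`) f ` edges K) \<subseteq> edges G" using KH(2) eG by (auto simp: edges_def)
  qed
  then show ?thesis using c1 c2 by simp
qed

definition Inv :: "nat \<Rightarrow> graph \<Rightarrow> bool" where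
  "Inv m G \<longleftrightarrow> is_graph G \<and> (\<exists>s. card (verts G) \<le> 1 + s*(m-1) \<and> card (verts G) + s \<le> card (edges G) + 1 \<and>
     (\<forall>k\<le>s. \<exists>H. subgraph H G \<and> card (verts H) \<le> 1 + k*(m-1) \<and> card (verts H) + k \<le> card (edges H) + 1))"

lemma sub_trans: "subgraph H G \<Longrightarrow> verts G \<subseteq> verts G' \<Longrightarrow> edges G \<subseteq> edges G' \<Longrightarrow> subgraph H G'"
  by (auto simp: subgraph_def)

lemma Inv_step:
  assumes I: "Inv m H" and S: "stepres m H G"
  shows "Inv m G"
proof -
  obtain s where s: "card (verts H) \<le> 1 + s*(m-1)" "card (verts H) + s \<le> card (edges H) + 1"
     "\<forall>k\<le>s. \<exists>K. subgraph K H \<and> card (verts K) \<le> 1 + k*(m-1) \<and> card (verts K) + k \<le> card (edges K) + 1"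
    using I unfolding Inv_def by blast
  obtain n where n: "n \<le> m - 1" "card (verts G) = card (verts H) + n" "card (edges H) + n + 1 \<le> card (edges G)"
    and g: "is_graph G" and sv: "verts H \<subseteq> verts G" and se: "edges H \<subseteq> edges G"
    using S unfolding stepres_def by blast
  show ?thesis unfolding Inv_def
  proof (intro conjI[OF g] exI[of _ "Suc s"] conjI allI impI)
    show "card (verts G) \<le> 1 + Suc s * (m - 1)" using s(1) n by simp
    show "card (verts G) + Suc s \<le> card (edges G) + 1" using s(2) n by simp
    fix k assume k: "k \<le> Suc s"
    show "\<exists>K. subgraph K G \<and> card (verts K) \<le> 1 + k * (m - 1) \<and> card (verts K) + k \<le> card (edges K) + 1"
    proof (cases "k \<le> s")
      case True
      then obtain K where "subgraph K H \<and> card (verts K) \<le> 1 + k*(m-1) \<and> card (verts K) + k \<le> card (edges K) + 1"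
        using s(3) by blast
      then show ?thesis using sub_trans[of K H G] sv se by blast
    next
      case False
      then have "k = Suc s" using k by simp
      then show ?thesis using sub_refl[OF g] s(1,2) n
        by (intro exI[of _ G]) simp
    qed
  qed
qed

lemma Hm_Inv: "Hm m G \<Longrightarrow> Inv m G"
proof (induction rule: Hm.induct)
  case (base x)
  have g: "is_graph ({x},{})" by (simp add: is_graph_def verts_def edges_def)
  show ?case unfolding Inv_def
  proof (intro conjI[OF g] exI[of _ 0] conjI allI impI)
    show "card (verts ({x}, {})) \<le> 1 + 0 * (m - 1)" by (simp add: verts_def)
    show "card (verts ({x}, {})) + 0 \<le> card (edges ({x}, {})) + 1" by (simp add: verts_def)
    fix k :: nat assume k: "k \<le> 0"
    show "\<exists>H. subgraph H ({x}, {}) \<and> card (verts H) \<le> 1 + k * (m - 1) \<and> card (verts H) + k \<le> card (edges H) + 1"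
      by (rule exI[of _ "({x},{})"]) (use g sub_refl[OF g] k in \<open>simp add: verts_def edges_def\<close>)
  qed
next
  case (first H G)
  then show ?case using ext12_step[of m H G] Inv_step unfolding Inv_def by blast
next
  case (second H G)
  then show ?case using ext12_step[of m H G] Inv_step unfolding Inv_def by blast
next
  case (third H G)
  then obtain s where s: "card (verts H) \<le> 1 + s*(m-1)" "card (verts H) + s \<le> card (edges H) + 1"
     "\<forall>k\<le>s. \<exists>K. subgraph K H \<and> card (verts K) \<le> 1 + k*(m-1) \<and> card (verts K) + k \<le> card (edges K) + 1"
    unfolding Inv_def by blast
  have g: "is_graph G" and vv: "verts H = verts G" and ss: "edges H \<subset> edges G" using third(2) by (auto simp: ext3_def)
  have "card (edges H) < card (edges G)" using ss graph_fin_edges[OF g] by (rule psubset_card_mono[rotated])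
  show ?case unfolding Inv_def
  proof (intro conjI exI[of _ s] allI impI)
    show "is_graph G" using g .
    show "card (verts G) \<le> 1 + s*(m-1)" using s vv by simp
    show "card (verts G) + s \<le> card (edges G) + 1" using s vv \<open>card (edges H) < card (edges G)\<close> by simp
    fix k assume "k \<le> s"
    then obtain K where "subgraph K H \<and> card (verts K) \<le> 1 + k*(m-1) \<and> card (verts K) + k \<le> card (edges K) + 1"
      using s(3) by blast
    then show "\<exists>K. subgraph K G \<and> card (verts K) \<le> 1 + k*(m-1) \<and> card (verts K) + k \<le> card (edges K) + 1"
      using sub_trans[of K H G] vv ss by blast
  qed
next
  case (iso H G)
  then obtain s where s: "card (verts H) \<le> 1 + s*(m-1)" "card (verts H) + s \<le> card (edges H) + 1"
     "\<forall>k\<le>s. \<exists>K. subgraph K H \<and> card (verts K) \<le> 1 + k*(m-1) \<and> card (verts K) + k \<le> card (edges K) + 1"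
    and gH: "is_graph H" unfolding Inv_def by blast
  obtain f where bij: "bij_betw f (verts H) (verts G)" and eG: "edges G = (\<lambda>e. f`e) ` edges H"
    using iso(2) by (auto simp: graph_iso_def)
  have GG: "(f ` verts H, (\<lambda>e. f`e) ` edges H) = G"
    using bij eG by (simp add: bij_betw_def verts_def edges_def prod_eq_iff)
  have HH: "subgraph G G \<and> card (verts G) = card (verts H) \<and> card (edges G) = card (edges H)"
  proof -
    have X: "subgraph (f ` verts H, (\<lambda>e. f`e) ` edges H) G \<and> card (f ` verts H) = card (verts H)
         \<and> card ((\<lambda>e. f`e) ` edges H) = card (edges H)" using iso_sub[OF bij eG sub_refl[OF gH]] .
    have vG: "f ` verts H = verts G" using bij by (simp add: bij_betw_def)
    show ?thesis using X unfolding GG vG eG[symmetric] by (simp add: verts_def edges_def)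
  qed
  show ?case unfolding Inv_def
  proof (intro conjI exI[of _ s] allI impI)
    show "is_graph G" using HH by (simp add: subgraph_def)
    show "card (verts G) \<le> 1 + s*(m-1)" using s HH by simp
    show "card (verts G) + s \<le> card (edges G) + 1" using s HH by simp
    fix k assume "k \<le> s"
    then obtain K where K: "subgraph K H" "card (verts K) \<le> 1 + k*(m-1)" "card (verts K) + k \<le> card (edges K) + 1"
      using s(3) by blast
    show "\<exists>K. subgraph K G \<and> card (verts K) \<le> 1 + k*(m-1) \<and> card (verts K) + k \<le> card (edges K) + 1"
      apply (rule exI[of _ "(f ` verts K, (\<lambda>e. f`e) ` edges K)"])
      using iso_sub[OF bij eG K(1)] K by (simp add: verts_def edges_def)
  qed
qed


lemma part2:
  assumes m3: "m \<ge> 3" and r: "1 < \<rho>" "\<rho> < real m / (real m - 1)"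
  shows "\<exists>\<eta> :: nat. \<forall>v :: nat. v > \<eta> \<longrightarrow>
               (\<forall>G. Hm m G \<and> card (verts G) = v \<longrightarrow>
                  (\<exists>H. subgraph H G \<and> card (verts H) \<le> \<eta> \<and> density H > \<rho>))"
proof -
  define d where "d = \<rho> - 1"
  have m1: "real m - 1 > 0" using m3 by simp
  have d0: "d > 0" using r d_def by simp
  have "\<rho> * (real m - 1) < real m" using r(2) m1 by (simp add: field_simps)
  then have dm: "d * (real m - 1) < 1" unfolding d_def by (simp add: algebra_simps)
  define c where "c = 1 - d * (real m - 1)"
  have c0: "c > 0" using dm c_def by simp
  obtain k :: nat where k: "(1 + d) / c < real k" using reals_Archimedean2 by blast
  have kc: "real k * c > 1 + d" using k c0 by (simp add: field_simps)
  have c1: "c \<le> 1" using c_def d0 m1 by simp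
  have "(1 + d) / c \<ge> 1 + d" using c0 c1 d0
    by (simp add: le_divide_eq mult_left_le)
  then have k2: "real k > 1" using k d0 by simp
  have mr: "real (m-1) = real m - 1" using m3 by (simp add: of_nat_diff)
  show ?thesis
  proof (intro exI[of _ "1 + k*(m-1)"] allI impI)
    fix v G assume v: "1 + k*(m-1) < v" and G: "Hm m G \<and> card (verts G) = v"
    then have "Inv m G" using Hm_Inv by blast
    then obtain s where s: "card (verts G) \<le> 1 + s*(m-1)"
      "\<forall>k\<le>s. \<exists>H. subgraph H G \<and> card (verts H) \<le> 1 + k*(m-1) \<and> card (verts H) + k \<le> card (edges H) + 1"
      unfolding Inv_def by blast
    have "k*(m-1) < s*(m-1)" using s(1) v G by linarith
    then have "k \<le> s" by (meson less_imp_le_nat mult_less_cancel2)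
    then obtain H where H: "subgraph H G" "card (verts H) \<le> 1 + k*(m-1)" "card (verts H) + k \<le> card (edges H) + 1"
      using s(2) by blast
    have gH: "is_graph H" using H(1) by (simp add: subgraph_def)
    define VH where "VH = real (card (verts H))"
    define EH where "EH = real (card (edges H))"
    have "real (card (verts H) + k) \<le> real (card (edges H) + 1)" using H(3) by (simp only: of_nat_le_iff)
    then have e1: "EH \<ge> VH + real k - 1" unfolding EH_def VH_def by simp
    have "real (card (verts H)) \<le> real (1 + k*(m-1))" using H(2) by (simp only: of_nat_le_iff)
    then have v1: "VH \<le> 1 + real k * (real m - 1)" using mr unfolding VH_def by simp
    have VH0: "VH > 0"
    proof (rule ccontr)
      assume "\<not> VH > 0"
      then have "card (verts H) = 0" unfolding VH_def by simp
      then have "verts H = {}" using gH by (simp add: is_graph_def)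
      then have "edges H = {}" using gH unfolding is_graph_def by blast
      then show False using H(3) k2 \<open>card (verts H) = 0\<close> by simp
    qed
    have A1: "d * VH \<le> d * (1 + real k * (real m - 1))" using v1 d0 by (simp add: mult_left_mono)
    have A2: "real k * c = real k - d * (real k * (real m - 1))" by (simp add: c_def algebra_simps)
    have A3: "d * (1 + real k * (real m - 1)) = d + d * (real k * (real m - 1))" by (simp add: algebra_simps)
    have A4: "\<rho> * VH = VH + d * VH" by (simp add: d_def algebra_simps)
    have "EH > \<rho> * VH" using A1 A2 A3 A4 kc e1 by linarith
    then have "density H > \<rho>" using VH0 unfolding density_def EH_def VH_def
      by (simp add: less_divide_eq)
    then show "\<exists>H. subgraph H G \<and> card (verts H) \<le> 1 + k * (m - 1) \<and> \<rho> < density H"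
      using H by blast
  qed
qed

theorem lemma1:
  fixes m :: nat
  assumes "m \<ge> 3"
  shows "(\<forall>G Gs t. Hm m G \<longrightarrow> m_decomposition m Gs t G \<longrightarrow>
            ((t = 1 \<and> Gs t \<noteq> G) \<or> t \<ge> 2) \<longrightarrow>
            (\<exists>a b :: nat. a > 0 \<and> b > 0 \<and> b \<le> m \<and>
               rho_max G = 1 + 1 / (real m - 1 + real b / real a)))
       \<and> (\<forall>\<rho> :: real. 1 < \<rho> \<and> \<rho> < real m / (real m - 1) \<longrightarrow>
            (\<exists>\<eta> :: nat. \<forall>v :: nat. v > \<eta> \<longrightarrow>
               (\<forall>G. Hm m G \<and> card (verts G) = v \<longrightarrow>
                  (\<exists>H. subgraph H G \<and> card (verts H) \<le> \<eta> \<and> density H > \<rho>))))"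
proof (intro conjI allI impI)
  fix G Gs t
  assume "m_decomposition m Gs t G" "(t = 1 \<and> Gs t \<noteq> G) \<or> t \<ge> 2"
  then show "\<exists>a b :: nat. a > 0 \<and> b > 0 \<and> b \<le> m \<and>
               rho_max G = 1 + 1 / (real m - 1 + real b / real a)"
    using part1[OF assms] by blast
next
  fix \<rho> :: real assume "1 < \<rho> \<and> \<rho> < real m / (real m - 1)"
  then show "\<exists>\<eta> :: nat. \<forall>v :: nat. v > \<eta> \<longrightarrow>
               (\<forall>G. Hm m G \<and> card (verts G) = v \<longrightarrow>
                  (\<exists>H. subgraph H G \<and> card (verts H) \<le> \<eta> \<and> density H > \<rho>))"
    using part2[OF assms] by blast
qed


end
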